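(* Let $b\geq 2$ be fixed. For all $\beta\in\mathbb{R}$ with $\beta\notin\mathbb{Z}$ and all $N\geq 2$, \[ \left|\sum_{\substack{1\le m\leq N\\ (\overleftarrow{m},b)=1}}e(m\beta)\right|\ll_b\frac{\log N}{\|\beta\|}. \]
   Context: For a positive integer $n$ with $L$ digits in base $b$, $n=\sum_{0\leq i<L}\varepsilon_i(n)b^i$ ($\varepsilon_i(n)\in\{0,\dots,b-1\}$, $\varepsilon_{L-1}(n)\neq0$), its digital reverse is $\overleftarrow{n}=\sum_{0\leq i<L}\varepsilon_i(n)b^{L-1-i}$. $e(x)=\exp(2\pi ix)$ and $\|x\|=\min_{n\in\mathbb{Z}}|x-n|$. *)

theory Defs
  imports "HOL-Analysis.Analysis"
begin

fun digits :: "nat \<Rightarrow> nat \<Rightarrow> nat list" where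
  "digits b n = (if b < 2 \<or> n = 0 then [] else n mod b # digits b (n div b))"

definition digit_rev :: "nat \<Rightarrow> nat \<Rightarrow> nat" where
  "digit_rev b n = (let ds = digits b n; L = length ds in
     (\<Sum>i<L. ds ! i * b ^ (L - 1 - i)))"

definition e :: "real \<Rightarrow> complex" where
  "e x = exp (2 * pi * \<i> * complex_of_real x)"

definition dist_int :: "real \<Rightarrow> real" where
  "dist_int x = (INF n::int. \<bar>x - real_of_int n\<bar>)"

end

theory Submission imports Defs begin

declare digits.simps[simp del]

lemma digits_len_last:
  assumes b: "b \<ge> 2"
  shows "b^L \<le> m \<Longrightarrow> m < b^(Suc L) \<Longrightarrow> length (digits b m) = Suc L \<and> last (digits b m) = m div b^L"
proof (induction L arbitrary: m)
  case 0
  have "digits b 0 = []" by (subst digits.simps) simp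
  moreover have "digits b m = m mod b # digits b (m div b)"
    using b 0 by (subst digits.simps) simp
  ultimately have "digits b m = [m]" using 0 by simp
  then show ?case using 0 by simp
next
  case (Suc L)
  have m0: "m > 0" using Suc.prems(1) b
    by (metis not_gr_zero not_less_zero power_not_zero zero_neq_numeral le_zero_eq le_antisym not_less one_le_numeral
        le0 power_eq_0_iff order_trans) 
  have d: "digits b m = m mod b # digits b (m div b)"
    using b m0 by (subst digits.simps) simp
  have b0: "b > 0" using b by simp
  have "b^L \<le> m div b" using Suc.prems(1) b0
    by (simp add: less_eq_div_iff_mult_less_eq mult.commute)
  moreover have "m div b < b^(Suc L)" using Suc.prems(2) b0
    by (simp add: div_less_iff_less_mult mult.commute)
  ultimately have IH: "length (digits b (m div b)) = Suc L \<and> last (digits b (m div b)) = m div b div b ^ L"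
    using Suc.IH by blast
  have "digits b (m div b) \<noteq> []" using IH by auto
  then show ?case using IH d by (simp add: div_mult2_eq)
qed

lemma rev_coprime:
  assumes b: "b \<ge> 2" and m: "m > 0"
  shows "coprime (digit_rev b m) b \<longleftrightarrow> coprime (last (digits b m)) b"
proof -
  define ds where "ds = digits b m"
  have ne: "ds \<noteq> []" using b m unfolding ds_def by (subst digits.simps) simp
  define n where "n = length ds - 1"
  have len: "length ds = Suc n" using ne unfolding n_def by (cases ds) auto
  have "digit_rev b m = (\<Sum>i<Suc n. ds ! i * b ^ (Suc n - 1 - i))"
    unfolding digit_rev_def Let_def ds_def[symmetric] len by simp
  also have "\<dots> = (\<Sum>i<n. ds ! i * b ^ (n - i)) + ds ! n" by simp
  finally have eq: "digit_rev b m = (\<Sum>i<n. ds ! i * b ^ (n - i)) + last ds"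
    using len ne by (simp add: last_conv_nth)
  have "b dvd (\<Sum>i<n. ds ! i * b ^ (n - i))"
    by (rule dvd_sum) (auto intro!: dvd_mult dvd_power)
  then obtain k where "(\<Sum>i<n. ds ! i * b ^ (n - i)) = b * k" by blast
  then have "digit_rev b m mod b = last ds mod b" using eq by simp
  then show ?thesis using b
    by (metis coprime_mod_left_iff ds_def not_numeral_le_zero le_zero_eq)
qed

lemma geo_mult:
  fixes z :: complex
  shows "a \<le> c \<Longrightarrow> (1 - z) * (\<Sum>i\<in>{a..<c}. z ^ i) = z ^ a - z ^ c"
proof (induction c)
  case 0 then show ?case by simp
next
  case (Suc c)
  show ?case
  proof (cases "a = Suc c")
    case True then show ?thesis by simp
  next
    case False
    then have "a \<le> c" using Suc.prems by simp
    then have "(1 - z) * (\<Sum>i\<in>{a..<Suc c}. z ^ i) = (1 - z) * (\<Sum>i\<in>{a..<c}. z ^ i) + (1 - z) * z ^ c"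
      by (simp add: distrib_left)
    also have "\<dots> = z ^ a - z ^ c + (1 - z) * z ^ c" using Suc.IH \<open>a \<le> c\<close> by simp
    finally show ?thesis by (simp add: algebra_simps)
  qed
qed

lemma geo_bound:
  fixes z :: complex
  assumes "norm z = 1" "z \<noteq> 1"
  shows "norm (\<Sum>i\<in>{a..<c}. z ^ i) \<le> 2 / norm (1 - z)"
proof (cases "a \<le> c")
  case True
  have "norm (1 - z) * norm (\<Sum>i\<in>{a..<c}. z ^ i) = norm (z ^ a - z ^ c)"
    using geo_mult[OF True, of z] by (metis norm_mult)
  also have "\<dots> \<le> norm (z ^ a) + norm (z ^ c)" by (rule norm_triangle_ineq4)
  also have "\<dots> = 2" using assms by (simp add: norm_power)
  finally show ?thesis using assms by (simp add: field_simps)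
next
  case False then show ?thesis by simp
qed

lemma cos_lower: "(x::real) \<ge> 0 \<Longrightarrow> cos x \<ge> 1 - x^2/2"
proof -
  assume x: "x \<ge> 0"
  have "(\<lambda>t. cos t - 1 + t^2/2) 0 \<le> (\<lambda>t. cos t - 1 + t^2/2) x"
  proof (rule DERIV_nonneg_imp_nondecreasing[OF x])
    fix t :: real assume "0 \<le> t" "t \<le> x"
    then show "\<exists>y. ((\<lambda>t. cos t - 1 + t^2/2) has_real_derivative y) (at t) \<and> y \<ge> 0"
      by (intro exI[of _ "- sin t + t"]) (auto intro!: derivative_eq_intros sin_x_le_x)
  qed
  then show ?thesis by simp
qed

lemma sin_lower: "(x::real) \<ge> 0 \<Longrightarrow> sin x \<ge> x - x^3/6"
proof -
  assume x: "x \<ge> 0"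
  have "(\<lambda>t. sin t - t + t^3/6) 0 \<le> (\<lambda>t. sin t - t + t^3/6) x"
  proof (rule DERIV_nonneg_imp_nondecreasing[OF x])
    fix t :: real assume "0 \<le> t" "t \<le> x"
    then show "\<exists>y. ((\<lambda>t. sin t - t + t^3/6) has_real_derivative y) (at t) \<and> y \<ge> 0"
      using cos_lower[of t]
      by (intro exI[of _ "cos t - 1 + t^2/2"]) (auto intro!: derivative_eq_intros)
  qed
  then show ?thesis by simp
qed

lemma dist_int_eq: "dist_int x = \<bar>x - of_int (round x)\<bar>"
proof (rule antisym)
  show "dist_int x \<le> \<bar>x - of_int (round x)\<bar>"
    unfolding dist_int_def by (rule cINF_lower) (auto intro: bdd_belowI[of _ 0])
  show "\<bar>x - of_int (round x)\<bar> \<le> dist_int x"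
    unfolding dist_int_def by (rule cINF_greatest) (auto intro: round_diff_minimal)
qed

lemma norm_e_sq: "norm (1 - e x) ^ 2 = 2 - 2 * cos (2 * pi * x)"
proof -
  have "norm (1 - e x) ^ 2 = (1 - cos (2 * pi * x))^2 + (sin (2 * pi * x))^2"
    unfolding cmod_power2 e_def by (simp add: Re_exp Im_exp)
  also have "\<dots> = 2 - 2 * cos (2 * pi * x)"
    using sin_cos_squared_add[of "2 * pi * x"] by (simp add: power2_eq_square algebra_simps)
  finally show ?thesis .
qed

lemma sin_jordan: "\<bar>t\<bar> \<le> 1/2 \<Longrightarrow> sin (pi * \<bar>t\<bar>) \<ge> 3/2 * \<bar>t\<bar>"
proof -
  assume t: "\<bar>t\<bar> \<le> 1/2"
  define u where "u = pi * \<bar>t\<bar>"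
  have u0: "u \<ge> 0" unfolding u_def by simp
  have "u \<le> pi / 2" unfolding u_def using t pi_gt_zero
    by (metis mult_left_mono less_imp_le mult.commute times_divide_eq_left mult_1 ) 
  then have "u^2 \<le> (pi/2)^2" using u0 by (intro power_mono) auto
  also have "\<dots> \<le> 3"
  proof -
    have "pi * pi \<le> 3.2 * 3.2" using pi_approx pi_gt_zero by (intro mult_mono) auto
    then show ?thesis by (simp add: power2_eq_square)
  qed
  finally have u2: "u^2 \<le> 3" .
  have "sin u \<ge> u - u^3/6" using sin_lower[OF u0] .
  moreover have "u - u^3/6 = u * (1 - u^2/6)" by (simp add: power2_eq_square power3_eq_cube algebra_simps)
  moreover have "u * (1 - u^2/6) \<ge> u * (1/2)" using u0 u2 by (intro mult_left_mono) auto
  moreover have "u * (1/2) \<ge> 3/2 * \<bar>t\<bar>"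
  proof -
    have "3 * \<bar>t\<bar> \<le> pi * \<bar>t\<bar>" by (rule mult_right_mono) (use pi_gt3 in auto)
    then show ?thesis unfolding u_def by simp
  qed
  ultimately have "sin u \<ge> 3/2 * \<bar>t\<bar>" by linarith
  then show ?thesis unfolding u_def .
qed

lemma norm_e_lower: "norm (1 - e x) \<ge> 3 * dist_int x"
proof -
  define n where "n = round x"
  define t where "t = x - of_int n"
  have t: "\<bar>t\<bar> \<le> 1/2" unfolding t_def n_def using of_int_round_abs_le[of x] by linarith
  have xt: "2 * pi * x = 2 * pi * t + 2 * pi * of_int n" unfolding t_def by (simp add: algebra_simps)
  have "cos (2 * pi * x) = cos (2 * pi * t)"
    unfolding xt using cos_add[of "2 * pi * t" "2 * pi * of_int n"] cos_integer_2pi[of "real_of_int n"] sin_integer_2pi[of "real_of_int n"] by simp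
  also have "\<dots> = 1 - 2 * sin (pi * t) ^ 2" using cos_double_sin[of "pi * t"] by (simp add: mult.assoc)
  finally have "norm (1 - e x) ^ 2 = 4 * sin (pi * t) ^ 2" using norm_e_sq[of x] by simp
  also have "sin (pi * t) ^ 2 = sin (pi * \<bar>t\<bar>) ^ 2"
  proof (cases "t \<ge> 0")
    case True then show ?thesis by simp
  next
    case False then have "\<bar>t\<bar> = - t" by simp
    then show ?thesis by simp
  qed
  finally have eq: "norm (1 - e x) ^ 2 = (2 * sin (pi * \<bar>t\<bar>)) ^ 2" by (simp add: power_mult_distrib)
  have "3 * \<bar>t\<bar> \<le> 2 * sin (pi * \<bar>t\<bar>)" using sin_jordan[OF t] by simp
  also have "\<dots> = norm (1 - e x)"
  proof -
    have "2 * sin (pi * \<bar>t\<bar>) \<ge> 0" using sin_jordan[OF t] by linarith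
    then show ?thesis by (rule power2_eq_imp_eq[OF eq[symmetric] _ norm_ge_zero])
  qed
  finally show ?thesis unfolding dist_int_eq t_def n_def .
qed

lemma convex_nat_interval:
  fixes S :: "nat set"
  assumes "finite S" "S \<noteq> {}" "\<And>x y w. x \<in> S \<Longrightarrow> y \<in> S \<Longrightarrow> x \<le> w \<Longrightarrow> w \<le> y \<Longrightarrow> w \<in> S"
  shows "S = {Min S..<Suc (Max S)}"
proof
  show "S \<subseteq> {Min S..<Suc (Max S)}" using assms(1) by (auto simp: less_Suc_eq_le)
  show "{Min S..<Suc (Max S)} \<subseteq> S"
  proof
    fix w assume "w \<in> {Min S..<Suc (Max S)}"
    then show "w \<in> S" using assms(3)[of "Min S" "Max S" w] assms(1,2) by auto
  qed
qed

lemma convex_geo_bound: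
  fixes z :: complex and S :: "nat set"
  assumes "norm z = 1" "z \<noteq> 1" "finite S"
    "\<And>x y w. x \<in> S \<Longrightarrow> y \<in> S \<Longrightarrow> x \<le> w \<Longrightarrow> w \<le> y \<Longrightarrow> w \<in> S"
  shows "norm (\<Sum>i\<in>S. z ^ i) \<le> 2 / norm (1 - z)"
proof (cases "S = {}")
  case True then show ?thesis by simp
next
  case False
  then have "S = {Min S..<Suc (Max S)}" using convex_nat_interval assms(3,4) by blast
  then show ?thesis using geo_bound[OF assms(1,2)] by metis
qed

lemma h_char:
  assumes b: "b \<ge> 2" and m: "m > 0"
  obtains L where "b^L \<le> m" "m < b^(Suc L)"
    "length (digits b m) = Suc L" "last (digits b m) = m div b^L"
proof -
  obtain L where "b^L \<le> m" "m < b^(L+1)" using ex_power_ivl1[OF b, of m] m by auto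
  then show ?thesis using that digits_len_last[OF b, of L m] by simp
qed

theorem lemma4p6:
  fixes b :: nat
  assumes "b \<ge> 2"
  shows "\<exists>C>0. \<forall>(\<beta>::real) (N::nat). \<beta> \<notin> \<int> \<longrightarrow> N \<ge> 2 \<longrightarrow>
           norm (\<Sum>m\<in>{m\<in>{1..N}. coprime (digit_rev b m) b}. e (real m * \<beta>))
             \<le> C * ln (real N) / dist_int \<beta>"
proof (intro exI[of _ "2 * real b / ln 2"] conjI allI impI)
  have b: "b \<ge> 2" by fact
  show "0 < 2 * real b / ln 2" using b by simp
  fix \<beta> :: real and N :: nat
  assume \<beta>: "\<beta> \<notin> \<int>" and N: "N \<ge> 2"
  define \<delta> where "\<delta> = dist_int \<beta>"
  have \<delta>pos: "\<delta> > 0"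
  proof -
    have "\<beta> \<noteq> of_int (round \<beta>)" using \<beta> by (metis Ints_of_int)
    then show ?thesis unfolding \<delta>_def dist_int_eq by simp
  qed
  define z where "z = e \<beta>"
  have nz: "norm (1 - z) \<ge> 3 * \<delta>" unfolding z_def \<delta>_def by (rule norm_e_lower)
  then have nzpos: "norm (1 - z) > 0" using \<delta>pos by linarith
  have z1: "z \<noteq> 1" using nzpos by auto
  have zn: "norm z = 1" unfolding z_def e_def by simp
  have ez: "e (real m * \<beta>) = z ^ m" for m
  proof -
    have "e (real m * \<beta>) = exp (of_nat m * (2 * pi * \<i> * complex_of_real \<beta>))"
      unfolding e_def by (simp add: algebra_simps)
    then show ?thesis unfolding z_def e_def by (simp add: exp_of_nat_mult)
  qed
  define A where "A = {m\<in>{1..N}. coprime (digit_rev b m) b}"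
  define h where "h = (\<lambda>m. (length (digits b m), last (digits b m)))"
  obtain LN where LN: "b^LN \<le> N" "N < b^(LN+1)" using ex_power_ivl1[OF b, of N] N by auto
  define T where "T = {..Suc LN} \<times> {..<b}"
  have finA: "finite A" unfolding A_def by simp
  have finT: "finite T" unfolding T_def by simp
  have hA: "h ` A \<subseteq> T"
  proof
    fix y assume "y \<in> h ` A"
    then obtain m where m: "m \<in> A" "y = h m" by blast
    then have m0: "m > 0" "m \<le> N" unfolding A_def by auto
    obtain L where L: "b^L \<le> m" "m < b^(Suc L)" "length (digits b m) = Suc L" "last (digits b m) = m div b^L"
      using h_char[OF b m0(1)] by blast
    have bL: "b^L < b^(LN+1)" using L(1) m0(2) LN(2) by linarith
    have b1: "1 < b" using b by simp
    have "L < LN + 1" by (rule power_less_imp_less_exp[OF b1 bL])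
    moreover have "m div b^L < b" using L(2) b
      by (simp add: div_less_iff_less_mult mult.commute)
    ultimately show "y \<in> T" unfolding T_def m(2) h_def L(3,4) by simp
  qed
  have sum_eq: "(\<Sum>m\<in>A. z ^ m) = (\<Sum>y\<in>T. \<Sum>m\<in>{x. x \<in> A \<and> h x = y}. z ^ m)"
    using sum.group[OF finA finT hA, of "\<lambda>m. z ^ m"] by simp
  have each: "norm (\<Sum>m\<in>{x. x \<in> A \<and> h x = y}. z ^ m) \<le> 2 / norm (1 - z)" for y
  proof (rule convex_geo_bound[OF zn z1])
    show "finite {x. x \<in> A \<and> h x = y}" using finA by simp
    fix x y' w assume x: "x \<in> {x. x \<in> A \<and> h x = y}" and y': "y' \<in> {x. x \<in> A \<and> h x = y}"
      and xw: "x \<le> w" and wy: "w \<le> y'"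
    have x0: "x > 0" "x \<le> N" using x unfolding A_def by auto
    have y0: "y' > 0" "y' \<le> N" using y' unfolding A_def by auto
    obtain Lx where Lx: "b^Lx \<le> x" "x < b^(Suc Lx)" "length (digits b x) = Suc Lx" "last (digits b x) = x div b^Lx"
      using h_char[OF b x0(1)] by blast
    obtain Ly where Ly: "b^Ly \<le> y'" "y' < b^(Suc Ly)" "length (digits b y') = Suc Ly" "last (digits b y') = y' div b^Ly"
      using h_char[OF b y0(1)] by blast
    have hxy: "h x = h y'" using x y' by simp
    then have "Lx = Ly" unfolding h_def using Lx(3) Ly(3) by simp
    then have dd: "x div b^Lx = y' div b^Lx" using hxy unfolding h_def using Lx(4) Ly(4) by simp
    have w1: "b^Lx \<le> w" "w < b^(Suc Lx)"
      using Lx(1) xw apply linarith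
      using Ly(2) wy \<open>Lx = Ly\<close> by simp
    have w0: "w > 0" using w1(1) b by (metis not_gr_zero le_zero_eq power_not_zero not_numeral_le_zero)
    have wd: "w div b^Lx = x div b^Lx"
      using div_le_mono[OF xw, of "b^Lx"] div_le_mono[OF wy, of "b^Lx"] dd by linarith
    have hw: "h w = h x" unfolding h_def
      using digits_len_last[OF b w1] Lx(3,4) wd by simp
    have "coprime (digit_rev b w) b \<longleftrightarrow> coprime (last (digits b w)) b" by (rule rev_coprime[OF b w0])
    also have "\<dots> \<longleftrightarrow> coprime (last (digits b x)) b" using hw unfolding h_def by simp
    also have "\<dots> \<longleftrightarrow> coprime (digit_rev b x) b" by (rule rev_coprime[OF b x0(1), symmetric])
    finally have "coprime (digit_rev b w) b" using x unfolding A_def by simp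
    then show "w \<in> {x. x \<in> A \<and> h x = y}"
      using x hw w0 wy y0(2) unfolding A_def by auto
  qed
  have "norm (\<Sum>m\<in>A. e (real m * \<beta>)) = norm (\<Sum>m\<in>A. z ^ m)" by (simp add: ez)
  also have "\<dots> \<le> (\<Sum>y\<in>T. norm (\<Sum>m\<in>{x. x \<in> A \<and> h x = y}. z ^ m))"
    unfolding sum_eq by (rule norm_sum)
  also have "\<dots> \<le> (\<Sum>y\<in>T. 2 / norm (1 - z))" by (rule sum_mono) (rule each)
  also have "\<dots> = real (card T) * (2 / norm (1 - z))" by simp
  also have "\<dots> \<le> real (card T) * (2 / (3 * \<delta>))"
    using nz \<delta>pos nzpos by (intro mult_left_mono divide_left_mono) auto
  also have "real (card T) = (real LN + 2) * real b" unfolding T_def by (simp add: card_cartesian_product algebra_simps)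
  also have "(real LN + 2) \<le> 3 * ln (real N) / ln 2"
  proof -
    have "real (2^LN) \<le> real N" using LN(1) b
      by (metis of_nat_le_iff order_trans power_mono zero_le_numeral)
    then have "ln (2 ^ LN) \<le> ln (real N)" using N by (simp add: ln_le_cancel_iff del: of_nat_power)
    then have "real LN * ln 2 \<le> ln (real N)" by (simp add: ln_realpow)
    then have l1: "real LN \<le> ln (real N) / ln 2" by (simp add: field_simps)
    have "ln 2 \<le> ln (real N)" using N by simp
    then have l2: "1 \<le> ln (real N) / ln 2" by simp
    have "3 * ln (real N) / ln 2 = 3 * (ln (real N) / ln 2)" by simp
    with l1 l2 show ?thesis by linarith
  qed
  then have "(real LN + 2) * real b * (2 / (3 * \<delta>)) \<le> 3 * ln (real N) / ln 2 * real b * (2 / (3 * \<delta>))"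
    using \<delta>pos by (intro mult_right_mono) auto
  also have "\<dots> = 2 * real b / ln 2 * ln (real N) / \<delta>" using \<delta>pos by (simp add: field_simps)
  finally show "norm (\<Sum>m\<in>{m\<in>{1..N}. coprime (digit_rev b m) b}. e (real m * \<beta>))
             \<le> 2 * real b / ln 2 * ln (real N) / dist_int \<beta>" unfolding A_def \<delta>_def .
qed

end
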